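(* Let $k\ge 1$ and $d,n_1,\dots,n_k\ge 1$ be integers. Let $G_1\in\mathbb{R}^{n_1\times d},\dots,G_k\in\mathbb{R}^{n_k\times d}$, $\gamma_1,\dots,\gamma_k\in\mathbb{R}$, $g_1,\dots,g_k\in\mathbb{R}^d$, $h_1\in\mathbb{R}^{n_1},\dots,h_k\in\mathbb{R}^{n_k}$ be mutually independent, each with i.i.d. $\mathcal{N}(0,1)$ entries. Let $\alpha_1,\dots,\alpha_k:\mathbb{R}^d\to\mathbb{R}^d$ and $\beta_\ell:\mathbb{R}^{n_\ell}\to\mathbb{R}^{n_\ell}$ ($\ell=1,\dots,k$) be arbitrary (deterministic) functions. Let $I,J_1,\dots,J_k$ be finite sets, $\{w_i\}_{i\in I}\subset\mathbb{R}^d$, and $\{v_{j_\ell}\}_{j_\ell\in J_\ell}\subset\mathbb{R}^{n_\ell}$ for each $\ell$. Put $J=J_1\times\dots\times J_k$, and for $j=(j_1,\dots,j_k)\in J$ write $v_{j\ell}:=v_{j_\ell}$. Define, for $i\in I$, $j\in J$, $$Y_{ij}=\sum_{\ell=1}^k\Big[\beta_\ell(v_{j\ell})^TG_\ell\,\alpha_\ell(w_i)+\gamma_\ell\,\|\alpha_\ell(w_i)\|_2\,\|\beta_\ell(v_{j\ell})\|_2\Big],$$ $$X_{ij}=\sum_{\ell=1}^k\Big[\|\beta_\ell(v_{j\ell})\|_2\,\alpha_\ell(w_i)^Tg_\ell+\|\alpha_\ell(w_i)\|_2\,h_\ell^T\beta_\ell(v_{j\ell})\Big].$$ Then $(X_{ij})$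 and $(Y_{ij})$ are centered Gaussian processes on $I\times J$ satisfying: (1) $\mathbb{E}X_{ij}^2=\mathbb{E}Y_{ij}^2$ for all $i\in I,j\in J$; (2) $\mathbb{E}X_{ij}X_{ij'}\ge\mathbb{E}Y_{ij}Y_{ij'}$ for all $i\in I$, $j,j'\in J$; (3) $\mathbb{E}X_{ij}X_{i'j'}\le\mathbb{E}Y_{ij}Y_{i'j'}$ for all $i\ne i'\in I$, $j,j'\in J$. Moreover, the processes $\tilde X_{ji}:=X_{ij}$ and $\tilde Y_{ji}:=Y_{ij}$ indexed by $J\times I$ satisfy the same three conditions with the roles of the index sets exchanged, i.e. $\mathbb{E}\tilde X_{ji}^2=\mathbb{E}\tilde Y_{ji}^2$; $\mathbb{E}\tilde X_{ji}\tilde X_{ji'}\ge\mathbb{E}\tilde Y_{ji}\tilde Y_{ji'}$ for all $j\in J$, $i,i'\in I$; and $\mathbb{E}\tilde X_{ji}\tilde X_{j'i'}\le\mathbb{E}\tilde Y_{ji}\tilde Y_{j'i'}$ for all $j\ne j'\in J$, $i,i'\in I$.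
   Context: All norms $\|\cdot\|_2$ are Euclidean norms. *)

theory Defs
  imports "HOL-Probability.Probability"
begin

text \<open>Index type for the scalar Gaussian entries:
  IG l a b = entry (a,b) of G_l, Igam l = gamma_l, Ig l b = entry b of g_l,
  Ih l a = entry a of h_l.\<close>
datatype gidx = IG nat nat nat | Igam nat | Ig nat nat | Ih nat nat

definition gidx_set :: "nat \<Rightarrow> nat \<Rightarrow> (nat \<Rightarrow> nat) \<Rightarrow> gidx set" where
  "gidx_set k d n =
     {IG l a b | l a b. l \<in> {1..k} \<and> a < n l \<and> b < d}
   \<union> {Igam l | l. l \<in> {1..k}}
   \<union> {Ig l b | l b. l \<in> {1..k} \<and> b < d}
   \<union> {Ih l a | l a. l \<in> {1..k} \<and> a < n l}"

definition vnorm :: "nat \<Rightarrow> (nat \<Rightarrow> real) \<Rightarrow> real" where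
  "vnorm m x = sqrt (\<Sum>a<m. (x a)\<^sup>2)"

definition centered_normal_rv :: "'a measure \<Rightarrow> ('a \<Rightarrow> real) \<Rightarrow> bool" where
  "centered_normal_rv M Z \<longleftrightarrow>
     Z \<in> borel_measurable M \<and>
     ((\<exists>\<sigma>>0. distributed M lborel Z (normal_density 0 \<sigma>)) \<or> (AE \<omega> in M. Z \<omega> = 0))"

definition centered_gaussian_process :: "'a measure \<Rightarrow> 't set \<Rightarrow> ('t \<Rightarrow> 'a \<Rightarrow> real) \<Rightarrow> bool" where
  "centered_gaussian_process M T X \<longleftrightarrow>
     (\<forall>t\<in>T. X t \<in> borel_measurable M) \<and>
     (\<forall>F c. finite F \<longrightarrow> F \<subseteq> T \<longrightarrow>
        centered_normal_rv M (\<lambda>\<omega>. \<Sum>t\<in>F. c t * X t \<omega>))"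

end

theory Submission
  imports Defs
begin
lemma sum_gidx:
  "(\<Sum>g\<in>gidx_set k d n. f g) = (\<Sum>l\<in>{1..k}. (\<Sum>a<n l. \<Sum>b<d. f (IG l a b)) + f (Igam l)
      + (\<Sum>b<d. f (Ig l b)) + (\<Sum>a<n l. f (Ih l a)))"
proof -
  define A1 where "A1 = (\<lambda>(l,a,b). IG l a b) ` (SIGMA l:{1..k}. {..<n l} \<times> {..<d})"
  define A2 where "A2 = Igam ` {1..k}"
  define A3 where "A3 = (\<lambda>(l,b). Ig l b) ` (SIGMA l:{1..k}. {..<d})"
  define A4 where "A4 = (\<lambda>(l,a). Ih l a) ` (SIGMA l:{1..k}. {..<n l})"
  have eq: "gidx_set k d n = A1 \<union> A2 \<union> A3 \<union> A4"
    unfolding gidx_set_def A1_def A2_def A3_def A4_def by force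
  have fin: "finite A1" "finite A2" "finite A3" "finite A4"
    unfolding A1_def A2_def A3_def A4_def by auto
  have s1: "sum f A1 = (\<Sum>l\<in>{1..k}. \<Sum>a<n l. \<Sum>b<d. f (IG l a b))"
  proof -
    have "sum f A1 = (\<Sum>x\<in>(SIGMA l:{1..k}. {..<n l} \<times> {..<d}). f (case x of (l,a,b) \<Rightarrow> IG l a b))"
      unfolding A1_def by (subst sum.reindex) (auto simp: inj_on_def)
    also have "\<dots> = (\<Sum>l\<in>{1..k}. \<Sum>ab\<in>{..<n l} \<times> {..<d}. f (case ab of (a,b) \<Rightarrow> IG l a b))"
      by (subst sum.Sigma) (auto simp: split_beta)
    also have "\<dots> = (\<Sum>l\<in>{1..k}. \<Sum>a<n l. \<Sum>b<d. f (IG l a b))"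
      by (simp add: sum.cartesian_product split_beta)
    finally show ?thesis .
  qed
  have s2: "sum f A2 = (\<Sum>l\<in>{1..k}. f (Igam l))"
    unfolding A2_def by (subst sum.reindex) (auto simp: inj_on_def)
  have s3: "sum f A3 = (\<Sum>l\<in>{1..k}. \<Sum>b<d. f (Ig l b))"
  proof -
    have "sum f A3 = (\<Sum>x\<in>(SIGMA l:{1..k}. {..<d}). f (case x of (l,b) \<Rightarrow> Ig l b))"
      unfolding A3_def by (subst sum.reindex) (auto simp: inj_on_def)
    also have "\<dots> = (\<Sum>l\<in>{1..k}. \<Sum>b<d. f (Ig l b))"
      by (subst sum.Sigma) (auto simp: split_beta)
    finally show ?thesis .
  qed
  have s4: "sum f A4 = (\<Sum>l\<in>{1..k}. \<Sum>a<n l. f (Ih l a))"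
  proof -
    have "sum f A4 = (\<Sum>x\<in>(SIGMA l:{1..k}. {..<n l}). f (case x of (l,a) \<Rightarrow> Ih l a))"
      unfolding A4_def by (subst sum.reindex) (auto simp: inj_on_def)
    also have "\<dots> = (\<Sum>l\<in>{1..k}. \<Sum>a<n l. f (Ih l a))"
      by (subst sum.Sigma) (auto simp: split_beta)
    finally show ?thesis .
  qed
  have d: "A1 \<inter> A2 = {}" "(A1 \<union> A2) \<inter> A3 = {}" "(A1 \<union> A2 \<union> A3) \<inter> A4 = {}"
    unfolding A1_def A2_def A3_def A4_def by auto
  show ?thesis
    unfolding eq
    by (simp add: sum.union_disjoint fin d s1 s2 s3 s4 sum.distrib)
qed
lemma distributed_AE_cong:
  assumes "distributed M N X f" "AE \<omega> in M. X \<omega> = Y \<omega>" "Y \<in> measurable M N"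
  shows "distributed M N Y f"
  using assms distr_cong_AE[of M M N N X Y] unfolding distributed_def by auto

lemma (in prob_space) std_facts:
  assumes D: "distributed M lborel X std_normal_density"
  shows "integrable M X" "integrable M (\<lambda>\<omega>. X \<omega> * X \<omega>)" "expectation X = 0"
    "expectation (\<lambda>\<omega>. X \<omega> * X \<omega>) = 1"
proof -
  show "integrable M X"
    using distributed_integrable_var[OF D] integrable_std_normal_moment[of 1] by simp
  show "integrable M (\<lambda>\<omega>. X \<omega> * X \<omega>)"
    using distributed_integrable[OF D, of "\<lambda>x. x * x"] integrable_std_normal_moment[of 2]
    by (simp add: power2_eq_square)
  show E: "expectation X = 0" by (rule standard_normal_distributed_expectation[OF D])
  show "expectation (\<lambda>\<omega>. X \<omega> * X \<omega>) = 1"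
    using standard_normal_distributed_variance[OF D] E by (simp add: power2_eq_square)
qed

lemma (in prob_space) cov_lin:
  assumes fin: "finite S" and ind: "indep_vars (\<lambda>_. borel) Z S"
    and std: "\<And>g. g \<in> S \<Longrightarrow> distributed M lborel (Z g) std_normal_density"
  shows "expectation (\<lambda>\<omega>. (\<Sum>g\<in>S. c g * Z g \<omega>) * (\<Sum>h\<in>S. c' h * Z h \<omega>)) = (\<Sum>g\<in>S. c g * c' g)"
proof -
  have E: "integrable M (\<lambda>\<omega>. Z g \<omega> * Z h \<omega>) \<and> expectation (\<lambda>\<omega>. Z g \<omega> * Z h \<omega>) = (if g = h then 1 else 0)"
    if g: "g \<in> S" and h: "h \<in> S" for g h
  proof (cases "g = h")
    case True thus ?thesis using std_facts[OF std[OF g]] by simp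
  next
    case False
    have "indep_vars (\<lambda>_. borel) Z (insert g {h})"
      by (rule indep_vars_subset[OF ind]) (use g h in auto)
    from indep_vars_sum[of "{h}" g Z, OF _ _ this] False
    have iv: "indep_var borel (Z g) borel (Z h)" by simp
    show ?thesis
      using indep_var_lebesgue_integral[OF iv] indep_var_integrable[OF iv]
        std_facts[OF std[OF g]] std_facts[OF std[OF h]] False by simp
  qed
  have "(\<lambda>\<omega>. (\<Sum>g\<in>S. c g * Z g \<omega>) * (\<Sum>h\<in>S. c' h * Z h \<omega>))
      = (\<lambda>\<omega>. \<Sum>g\<in>S. \<Sum>h\<in>S. c g * c' h * (Z g \<omega> * Z h \<omega>))"
    by (simp add: sum_product mult_ac)
  then have "expectation (\<lambda>\<omega>. (\<Sum>g\<in>S. c g * Z g \<omega>) * (\<Sum>h\<in>S. c' h * Z h \<omega>))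
      = (\<Sum>g\<in>S. \<Sum>h\<in>S. c g * c' h * expectation (\<lambda>\<omega>. Z g \<omega> * Z h \<omega>))"
    using E by (simp add: Bochner_Integration.integral_sum)
  also have "\<dots> = (\<Sum>g\<in>S. \<Sum>h\<in>S. c g * c' h * (if g = h then 1 else 0))"
    using E by (intro sum.cong refl) simp
  also have "\<dots> = (\<Sum>g\<in>S. c g * c' g)"
    using fin by (simp add: if_distrib sum.delta cong: if_cong)
  finally show ?thesis .
qed

lemma (in prob_space) lin_meas:
  assumes std: "\<And>g. g \<in> S \<Longrightarrow> distributed M lborel (Z g) std_normal_density" and F: "F \<subseteq> S"
  shows "(\<lambda>\<omega>. \<Sum>g\<in>F. c g * Z g \<omega>) \<in> borel_measurable M"
proof -
  have "Z g \<in> borel_measurable M" if "g \<in> F" for g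
    using distributed_measurable[OF std[of g]] that F by auto
  then show ?thesis by (intro borel_measurable_sum borel_measurable_times) auto
qed

lemma (in prob_space) lin_normal:
  assumes fin: "finite S" and ind: "indep_vars (\<lambda>_. borel) Z S"
    and std: "\<And>g. g \<in> S \<Longrightarrow> distributed M lborel (Z g) std_normal_density" and F: "F \<subseteq> S"
  shows "centered_normal_rv M (\<lambda>\<omega>. \<Sum>g\<in>F. c g * Z g \<omega>)"
  using finite_subset[OF F fin] F
proof (induction F rule: finite_induct)
  case empty
  show ?case by (simp add: centered_normal_rv_def)
next
  case (insert x F)
  have xS: "x \<in> S" and FS: "F \<subseteq> S" using insert by auto
  define W where "W = (\<lambda>\<omega>. \<Sum>g\<in>F. c g * Z g \<omega>)"
  have IH: "centered_normal_rv M W" using insert FS unfolding W_def by auto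
  have mW: "W \<in> borel_measurable M" unfolding W_def by (rule lin_meas[OF std FS])
  have mN: "(\<lambda>\<omega>. \<Sum>g\<in>insert x F. c g * Z g \<omega>) \<in> borel_measurable M"
    by (rule lin_meas[OF std insert.prems])
  have eq: "(\<lambda>\<omega>. \<Sum>g\<in>insert x F. c g * Z g \<omega>) = (\<lambda>\<omega>. c x * Z x \<omega> + W \<omega>)"
    using insert.hyps unfolding W_def by simp
  show ?case
  proof (cases "c x = 0")
    case True
    then show ?thesis using IH eq by simp
  next
    case False
    have Dx: "distributed M lborel (\<lambda>\<omega>. c x * Z x \<omega>) (normal_density 0 \<bar>c x\<bar>)"
      using normal_density_affine[OF std[OF xS], of "c x" 0] False by simp
    have "indep_vars (\<lambda>_. borel) (\<lambda>g \<omega>. c g * Z g \<omega>) (insert x F)"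
      by (rule indep_vars_compose2[OF indep_vars_subset[OF ind insert.prems], of "\<lambda>g y. c g * y"]) simp
    from indep_vars_sum[OF insert.hyps(1,2) this]
    have iv: "indep_var borel (\<lambda>\<omega>. c x * Z x \<omega>) borel W" unfolding W_def by simp
    from IH[unfolded centered_normal_rv_def] show ?thesis
    proof (elim conjE disjE exE)
      fix \<sigma> assume s: "\<sigma> > 0" and DW: "distributed M lborel W (normal_density 0 \<sigma>)"
      have "distributed M lborel (\<lambda>\<omega>. c x * Z x \<omega> + W \<omega>) (normal_density (0+0) (sqrt ((\<bar>c x\<bar>)\<^sup>2 + \<sigma>\<^sup>2)))"
        by (rule add_indep_normal[OF iv _ s Dx DW]) (use False in simp)
      moreover have "sqrt ((\<bar>c x\<bar>)\<^sup>2 + \<sigma>\<^sup>2) > 0" using s by (simp add: add_nonneg_pos)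
      ultimately show ?thesis unfolding centered_normal_rv_def eq using mN eq by auto
    next
      assume "AE \<omega> in M. W \<omega> = 0"
      then have "AE \<omega> in M. c x * Z x \<omega> = c x * Z x \<omega> + W \<omega>" by auto
      from distributed_AE_cong[OF Dx this] mN eq
      have "distributed M lborel (\<lambda>\<omega>. c x * Z x \<omega> + W \<omega>) (normal_density 0 \<bar>c x\<bar>)" by simp
      then show ?thesis unfolding centered_normal_rv_def eq using mN eq False by auto
    qed
  qed
qed

lemma finite_gidx: "finite (gidx_set k d n)"
proof -
  have mx: "\<And>l a. l \<in> {1..k} \<Longrightarrow> a < n l \<Longrightarrow> a < Max (n ` {1..k})"
    by (meson Max_ge finite_atLeastAtMost finite_imageI image_eqI order_less_le_trans)
  have "gidx_set k d n \<subseteq> (\<lambda>(l,a,b). IG l a b) ` ({1..k} \<times> {..<Max (n ` {1..k})} \<times> {..<d})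
     \<union> Igam ` {1..k} \<union> (\<lambda>(l,b). Ig l b) ` ({1..k} \<times> {..<d}) \<union> (\<lambda>(l,a). Ih l a) ` ({1..k} \<times> {..<Max (n ` {1..k})})"
    unfolding gidx_set_def using mx by (auto simp: image_iff)
  then show ?thesis by (rule finite_subset) auto
qed

lemma vnorm_sq: "(\<Sum>q<m. x q * x q) = vnorm m x * vnorm m x"
  unfolding vnorm_def by (simp add: sum_nonneg power2_eq_square[symmetric])

lemma vnorm_CS: "(\<Sum>q<m. x q * y q) \<le> vnorm m x * vnorm m y"
proof -
  have "(\<Sum>q<m. x q * y q) \<le> (\<Sum>q<m. \<bar>x q\<bar> * \<bar>y q\<bar>)"
    by (intro sum_mono) (metis abs_ge_self abs_mult)
  also have "\<dots> \<le> L2_set x {..<m} * L2_set y {..<m}" by (rule L2_set_mult_ineq)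
  finally show ?thesis unfolding vnorm_def L2_set_def .
qed
theorem lemma4p1:
  fixes M :: "'a measure"
    and k d :: nat and n :: "nat \<Rightarrow> nat"
    and Z :: "gidx \<Rightarrow> 'a \<Rightarrow> real"
    and \<alpha> \<beta> :: "nat \<Rightarrow> (nat \<Rightarrow> real) \<Rightarrow> (nat \<Rightarrow> real)"
    and I :: "'i set" and J :: "nat \<Rightarrow> 'j set"
    and w :: "'i \<Rightarrow> (nat \<Rightarrow> real)"
    and v :: "nat \<Rightarrow> 'j \<Rightarrow> (nat \<Rightarrow> real)"
    and X Y :: "'i \<Rightarrow> (nat \<Rightarrow> 'j) \<Rightarrow> 'a \<Rightarrow> real"
  assumes M: "prob_space M"
    and k: "k \<ge> 1" and d: "d \<ge> 1" and n: "\<And>l. l \<in> {1..k} \<Longrightarrow> n l \<ge> 1"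
    and indep: "prob_space.indep_vars M (\<lambda>_. borel) Z (gidx_set k d n)"
    and std: "\<And>x. x \<in> gidx_set k d n \<Longrightarrow> distributed M lborel (Z x) std_normal_density"
    and finI: "finite I" and finJ: "\<And>l. l \<in> {1..k} \<Longrightarrow> finite (J l)"
    and Ydef: "\<And>i j \<omega>. Y i j \<omega> = (\<Sum>l\<in>{1..k}.
          (\<Sum>a<n l. \<Sum>b<d. \<beta> l (v l (j l)) a * Z (IG l a b) \<omega> * \<alpha> l (w i) b)
          + Z (Igam l) \<omega> * vnorm d (\<alpha> l (w i)) * vnorm (n l) (\<beta> l (v l (j l))))"
    and Xdef: "\<And>i j \<omega>. X i j \<omega> = (\<Sum>l\<in>{1..k}.
          vnorm (n l) (\<beta> l (v l (j l))) * (\<Sum>b<d. \<alpha> l (w i) b * Z (Ig l b) \<omega>)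
          + vnorm d (\<alpha> l (w i)) * (\<Sum>a<n l. Z (Ih l a) \<omega> * \<beta> l (v l (j l)) a))"
  shows "centered_gaussian_process M (I \<times> Pi\<^sub>E {1..k} J) (\<lambda>(i, j). X i j)
       \<and> centered_gaussian_process M (I \<times> Pi\<^sub>E {1..k} J) (\<lambda>(i, j). Y i j)
       \<and> (\<forall>i\<in>I. \<forall>j\<in>Pi\<^sub>E {1..k} J.
            prob_space.expectation M (\<lambda>\<omega>. (X i j \<omega>)\<^sup>2)
              = prob_space.expectation M (\<lambda>\<omega>. (Y i j \<omega>)\<^sup>2))
       \<and> (\<forall>i\<in>I. \<forall>j\<in>Pi\<^sub>E {1..k} J. \<forall>j'\<in>Pi\<^sub>E {1..k} J.
            prob_space.expectation M (\<lambda>\<omega>. X i j \<omega> * X i j' \<omega>)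
              \<ge> prob_space.expectation M (\<lambda>\<omega>. Y i j \<omega> * Y i j' \<omega>))
       \<and> (\<forall>i\<in>I. \<forall>i'\<in>I. \<forall>j\<in>Pi\<^sub>E {1..k} J. \<forall>j'\<in>Pi\<^sub>E {1..k} J. i \<noteq> i' \<longrightarrow>
            prob_space.expectation M (\<lambda>\<omega>. X i j \<omega> * X i' j' \<omega>)
              \<le> prob_space.expectation M (\<lambda>\<omega>. Y i j \<omega> * Y i' j' \<omega>))
       \<and> (\<forall>j\<in>Pi\<^sub>E {1..k} J. \<forall>i\<in>I. \<forall>i'\<in>I.
            prob_space.expectation M (\<lambda>\<omega>. X i j \<omega> * X i' j \<omega>)
              \<ge> prob_space.expectation M (\<lambda>\<omega>. Y i j \<omega> * Y i' j \<omega>))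
       \<and> (\<forall>j\<in>Pi\<^sub>E {1..k} J. \<forall>j'\<in>Pi\<^sub>E {1..k} J. \<forall>i\<in>I. \<forall>i'\<in>I. j \<noteq> j' \<longrightarrow>
            prob_space.expectation M (\<lambda>\<omega>. X i j \<omega> * X i' j' \<omega>)
              \<le> prob_space.expectation M (\<lambda>\<omega>. Y i j \<omega> * Y i' j' \<omega>))"
proof -
  interpret prob_space M by (rule M)
  let ?S = "gidx_set k d n"
  have finS: "finite ?S" by (rule finite_gidx)
  define a where "a l i = \<alpha> l (w i)" for l i
  define b where "b l j = \<beta> l (v l (j l))" for l j
  define cX where "cX i j g = (case g of Ig l q \<Rightarrow> vnorm (n l) (b l j) * a l i q
      | Ih l p \<Rightarrow> vnorm d (a l i) * b l j p | _ \<Rightarrow> 0)" for i j g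
  define cY where "cY i j g = (case g of IG l p q \<Rightarrow> b l j p * a l i q
      | Igam l \<Rightarrow> vnorm d (a l i) * vnorm (n l) (b l j) | _ \<Rightarrow> 0)" for i j g
  have Xe: "X i j \<omega> = (\<Sum>g\<in>?S. cX i j g * Z g \<omega>)" for i j \<omega>
    by (simp add: Xdef sum_gidx cX_def a_def b_def sum_distrib_left mult_ac)
  have Ye: "Y i j \<omega> = (\<Sum>g\<in>?S. cY i j g * Z g \<omega>)" for i j \<omega>
    by (simp add: Ydef sum_gidx cY_def a_def b_def sum_distrib_left mult_ac)
  define A where "A l i i' = (\<Sum>q<d. a l i q * a l i' q)" for l i i'
  define NA where "NA l i i' = vnorm d (a l i) * vnorm d (a l i')" for l i i'
  define B where "B l j j' = (\<Sum>p<n l. b l j p * b l j' p)" for l j j'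
  define NB where "NB l j j' = vnorm (n l) (b l j) * vnorm (n l) (b l j')" for l j j'
  have covX: "expectation (\<lambda>\<omega>. X i j \<omega> * X i' j' \<omega>) =
     (\<Sum>l\<in>{1..k}. NB l j j' * A l i i' + NA l i i' * B l j j')" for i j i' j'
    unfolding Xe apply (subst cov_lin[OF finS indep std], assumption) apply (subst sum_gidx) by (simp add: cX_def sum_distrib_left mult_ac
        A_def B_def NA_def NB_def)
  have covY: "expectation (\<lambda>\<omega>. Y i j \<omega> * Y i' j' \<omega>) =
     (\<Sum>l\<in>{1..k}. B l j j' * A l i i' + NA l i i' * NB l j j')" for i j i' j'
    unfolding Ye apply (subst cov_lin[OF finS indep std], assumption) apply (subst sum_gidx) by (simp add: cY_def sum_distrib_left
        sum_distrib_right mult_ac A_def B_def NA_def NB_def)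
  have diff: "expectation (\<lambda>\<omega>. X i j \<omega> * X i' j' \<omega>) - expectation (\<lambda>\<omega>. Y i j \<omega> * Y i' j' \<omega>)
      = - (\<Sum>l\<in>{1..k}. (NA l i i' - A l i i') * (NB l j j' - B l j j'))" for i j i' j'
    unfolding covX covY sum_subtractf[symmetric] sum_negf[symmetric]
    by (intro sum.cong refl) (simp add: algebra_simps)
  have nnA: "NA l i i' - A l i i' \<ge> 0" for l i i'
    using vnorm_CS unfolding NA_def A_def by (simp add: a_def)
  have nnB: "NB l j j' - B l j j' \<ge> 0" for l j j'
    using vnorm_CS unfolding NB_def B_def by (simp add: b_def)
  have zA: "NA l i i - A l i i = 0" for l i
    unfolding NA_def A_def by (simp add: vnorm_sq)
  have zB: "NB l j j - B l j j = 0" for l j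
    unfolding NB_def B_def by (simp add: vnorm_sq)
  have le: "expectation (\<lambda>\<omega>. X i j \<omega> * X i' j' \<omega>) \<le> expectation (\<lambda>\<omega>. Y i j \<omega> * Y i' j' \<omega>)"
    for i j i' j'
  proof -
    have "0 \<le> (\<Sum>l\<in>{1..k}. (NA l i i' - A l i i') * (NB l j j' - B l j j'))"
      using nnA nnB by (intro sum_nonneg mult_nonneg_nonneg) auto
    then show ?thesis using diff[of i j i' j'] by linarith
  qed
  have eqi: "expectation (\<lambda>\<omega>. X i j \<omega> * X i j' \<omega>) = expectation (\<lambda>\<omega>. Y i j \<omega> * Y i j' \<omega>)"
    for i j j'
    using diff[of i j i j'] by (simp add: zA)
  have eqj: "expectation (\<lambda>\<omega>. X i j \<omega> * X i' j \<omega>) = expectation (\<lambda>\<omega>. Y i j \<omega> * Y i' j \<omega>)"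
    for i j i'
    using diff[of i j i' j] by (simp add: zB)
  have gp: "centered_gaussian_process M T (\<lambda>(i, j). V i j)"
    if Ve: "\<And>i j \<omega>. V i j \<omega> = (\<Sum>g\<in>?S. cV i j g * Z g \<omega>)" for T and V :: "'i \<Rightarrow> (nat \<Rightarrow> 'j) \<Rightarrow> 'a \<Rightarrow> real" and cV
  proof -
    have Vt: "(case t of (i, j) \<Rightarrow> V i j) \<omega> = (\<Sum>g\<in>?S. (case t of (i, j) \<Rightarrow> cV i j g) * Z g \<omega>)" for t \<omega>
      by (cases t) (simp add: Ve)
    show ?thesis unfolding centered_gaussian_process_def
    proof (intro conjI ballI allI impI)
      fix t
      show "(case t of (i, j) \<Rightarrow> V i j) \<in> borel_measurable M"
        unfolding Vt[abs_def] by (rule lin_meas[OF std subset_refl])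
    next
      fix F :: "('i \<times> (nat \<Rightarrow> 'j)) set" and c
      have "(\<lambda>\<omega>. \<Sum>t\<in>F. c t * (case t of (i, j) \<Rightarrow> V i j) \<omega>)
          = (\<lambda>\<omega>. \<Sum>g\<in>?S. (\<Sum>t\<in>F. c t * (case t of (i, j) \<Rightarrow> cV i j g)) * Z g \<omega>)"
        unfolding Vt by (rule ext, simp add: sum_distrib_left sum_distrib_right mult.assoc, rule sum.swap)
      then show "centered_normal_rv M (\<lambda>\<omega>. \<Sum>t\<in>F. c t * (case t of (i, j) \<Rightarrow> V i j) \<omega>)"
        using lin_normal[OF finS indep std subset_refl] by simp
    qed
  qed
  show ?thesis
    using gp[OF Xe] gp[OF Ye] le eqi eqj by (simp add: power2_eq_square)
qed
end
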